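(* Let $N\equiv 3\pmod 4$ be a prime and let $h_1,h_2,c_1,c_2,c_4\in\mathbb Z$ with $4c_1c_4-c_2^2\not\equiv 0\pmod N$. Let $a,b$ be arbitrary integers coprime to $N$, and let $L(c_1,c_2,c_4,h_1,h_2)$ denote the number of triples $d_1,d_2,d_4\pmod N$ satisfying \[ h_1\equiv a(d_1+d_4),\qquad (d_1d_4-d_2^2)h_2\equiv b(d_4c_1-d_2c_2+d_1c_4),\qquad d_1d_4-d_2^2\not\equiv 0\pmod N. \] Then \[ L(c_1,c_2,c_4,h_1,h_2)=\delta_{h_1\equiv h_2\equiv 0\ (\mathrm{mod}\ N)}\,\delta_{c_1\equiv c_4,\ c_2\equiv 0\ (\mathrm{mod}\ N)}\,N^2+\mathcal O(N), \] where $\delta_{\cdot}$ is $1$ if the indicated condition holds and $0$ otherwise, and the implied constant is absolute. *)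

theory Defs
  imports "HOL-Number_Theory.Number_Theory"
begin

definition L_count :: "int \<Rightarrow> int \<Rightarrow> int \<Rightarrow> int \<Rightarrow> int \<Rightarrow> int \<Rightarrow> int \<Rightarrow> int \<Rightarrow> nat" where
  "L_count N a b c1 c2 c4 h1 h2 =
     card {(d1::int, d2::int, d4::int).
             d1 \<in> {0..<N} \<and> d2 \<in> {0..<N} \<and> d4 \<in> {0..<N} \<and>
             [h1 = a * (d1 + d4)] (mod N) \<and>
             [(d1 * d4 - d2^2) * h2 = b * (d4 * c1 - d2 * c2 + d1 * c4)] (mod N) \<and>
             \<not> [d1 * d4 - d2^2 = 0] (mod N)}"

end

theory Submission imports Defs begin

lemma box_eq:
  fixes p x y :: int
  assumes "0 \<le> x" "x < p" "0 \<le> y" "y < p" "p dvd (x - y)"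
  shows "x = y"
proof -
  have "x mod p = y mod p" using assms(5) by (metis cong_def cong_iff_dvd_diff)
  thus ?thesis using assms by simp
qed

lemma card_le2:
  assumes "finite S" "\<And>x y z. x \<in> S \<Longrightarrow> y \<in> S \<Longrightarrow> z \<in> S \<Longrightarrow> x \<noteq> y \<Longrightarrow> x \<noteq> z \<Longrightarrow> y \<noteq> z \<Longrightarrow> False"
  shows "card S \<le> 2"
proof (rule ccontr)
  assume "\<not> card S \<le> 2"
  hence "card S \<ge> 3" by simp
  hence "S \<noteq> {}" by (metis card.empty not_numeral_le_zero)
  then obtain x where x: "x \<in> S" by blast
  have "card (S - {x}) \<ge> 2" using \<open>card S \<ge> 3\<close> x assms(1) by simp
  hence "S - {x} \<noteq> {}" by (metis card.empty not_numeral_le_zero)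
  then obtain y where y: "y \<in> S - {x}" by blast
  have "card (S - {x} - {y}) \<ge> 1" using \<open>card (S - {x}) \<ge> 2\<close> y assms(1) by simp
  hence "S - {x} - {y} \<noteq> {}" by (metis card.empty not_one_le_zero)
  then obtain z where z: "z \<in> S - {x} - {y}" by blast
  have "x \<in> S" "y \<in> S" "z \<in> S" "x \<noteq> y" "x \<noteq> z" "y \<noteq> z" using x y z by auto
  thus False using assms(2) by blast
qed

lemma quad_roots:
  fixes p A B C :: int
  assumes p: "prime p" and A: "\<not> p dvd A"
  shows "card {x \<in> {0..<p}. p dvd (A*x^2 + B*x + C)} \<le> 2"
proof (rule card_le2)
  show "finite {x \<in> {0..<p}. p dvd (A*x^2 + B*x + C)}" by (rule finite_subset[of _ "{0..<p}"]) auto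
next
  fix x y z assume xyz: "x \<in> {x \<in> {0..<p}. p dvd (A*x^2 + B*x + C)}"
    "y \<in> {x \<in> {0..<p}. p dvd (A*x^2 + B*x + C)}" "z \<in> {x \<in> {0..<p}. p dvd (A*x^2 + B*x + C)}"
    "x \<noteq> y" "x \<noteq> z" "y \<noteq> z"
  have key: "p dvd (A*(u+v) + B)" if "u \<in> {x \<in> {0..<p}. p dvd (A*x^2 + B*x + C)}"
    "v \<in> {x \<in> {0..<p}. p dvd (A*x^2 + B*x + C)}" "u \<noteq> v" for u v
  proof -
    have "p dvd ((A*u^2 + B*u + C) - (A*v^2 + B*v + C))" by (rule dvd_diff) (use that in auto)
    moreover have "(A*u^2 + B*u + C) - (A*v^2 + B*v + C) = (u - v) * (A*(u+v) + B)"
      by (simp add: algebra_simps power2_eq_square)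
    ultimately have "p dvd (u - v) * (A*(u+v) + B)" by simp
    moreover have "\<not> p dvd (u - v)" using that box_eq[of u p v] by auto
    ultimately show ?thesis using p prime_dvd_mult_iff by blast
  qed
  have "p dvd ((A*(x+y) + B) - (A*(x+z) + B))" using key[OF xyz(1,2,4)] key[OF xyz(1,3,5)] by (rule dvd_diff)
  moreover have "(A*(x+y) + B) - (A*(x+z) + B) = A * (y - z)" by (simp add: algebra_simps)
  ultimately have "p dvd A * (y - z)" by simp
  moreover have "\<not> p dvd (y - z)" using xyz box_eq[of y p z] by auto
  ultimately show False using p A prime_dvd_mult_iff by blast
qed

lemma lin_roots:
  fixes p A B :: int
  assumes p: "prime p" and A: "\<not> p dvd A"
  shows "card {x \<in> {0..<p}. p dvd (A*x + B)} \<le> 1"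
proof -
  have "x = y" if "x \<in> {x \<in> {0..<p}. p dvd (A*x + B)}" "y \<in> {x \<in> {0..<p}. p dvd (A*x + B)}" for x y
  proof -
    have "p dvd ((A*x + B) - (A*y+B))" by (rule dvd_diff) (use that in auto)
    hence "p dvd A * (x - y)" by (simp add: algebra_simps)
    hence "p dvd (x - y)" using p A prime_dvd_mult_iff by blast
    thus ?thesis using that box_eq[of x p y] by auto
  qed
  moreover have "finite {x \<in> {0..<p}. p dvd (A*x + B)}" by (rule finite_subset[of _ "{0..<p}"]) auto
  ultimately show ?thesis by (simp add: card_le_Suc0_iff_eq)
qed

lemma fiber:
  fixes p :: int and X :: "(int \<times> int) set"
  assumes "X \<subseteq> {0..<p} \<times> {0..<p}"
    "\<And>y. y \<in> {0..<p} \<Longrightarrow> card {x \<in> {0..<p}. (x,y) \<in> X} \<le> k"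
  shows "card X \<le> k * nat p"
proof -
  have fin: "\<And>y. finite {x \<in> {0..<p}. (x,y) \<in> X}" by (rule finite_subset[of _ "{0..<p}"]) auto
  have "X \<subseteq> (\<Union>y\<in>{0..<p}. {x \<in> {0..<p}. (x,y) \<in> X} \<times> {y})" using assms(1) by auto
  hence "card X \<le> card (\<Union>y\<in>{0..<p}. {x \<in> {0..<p}. (x,y) \<in> X} \<times> {y})"
    by (intro card_mono finite_UN_I finite_cartesian_product fin) auto
  also have "\<dots> \<le> (\<Sum>y\<in>{0..<p}. card ({x \<in> {0..<p}. (x,y) \<in> X} \<times> {y}))"
    by (rule card_UN_le) simp
  also have "\<dots> = (\<Sum>y\<in>{0..<p}. card {x \<in> {0..<p}. (x,y) \<in> X})"
    by (simp add: card_cartesian_product)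
  also have "\<dots> \<le> of_nat (card {0..<p}) * k" by (rule sum_bounded_above) (use assms(2) in auto)
  finally show ?thesis by (simp add: mult.commute)
qed

lemma fiber2:
  fixes p :: int and X :: "(int \<times> int) set"
  assumes "X \<subseteq> {0..<p} \<times> {0..<p}"
    "\<And>x. x \<in> {0..<p} \<Longrightarrow> card {y \<in> {0..<p}. (x,y) \<in> X} \<le> k"
  shows "card X \<le> k * nat p"
proof -
  have "card X = card (prod.swap ` X)" by (simp add: card_image)
  also have "\<dots> \<le> k * nat p"
  proof (rule fiber)
    show "prod.swap ` X \<subseteq> {0..<p} \<times> {0..<p}" using assms(1) by auto
    fix y assume "y \<in> {0..<p}"
    have "{x \<in> {0..<p}. (x,y) \<in> prod.swap ` X} = {x \<in> {0..<p}. (y,x) \<in> X}" by force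
    thus "card {x \<in> {0..<p}. (x,y) \<in> prod.swap ` X} \<le> k" using assms(2)[OF \<open>y \<in> _\<close>] by simp
  qed
  finally show ?thesis .
qed


lemma main_bound:
  fixes N a b c1 c2 c4 h1 h2 :: int
  assumes p: "prime N" and nd: "\<not> N dvd (4*c1*c4 - c2^2)" and a: "\<not> N dvd a" and b: "\<not> N dvd b"
  defines "S \<equiv> {(d1::int, d2::int, d4::int).
             d1 \<in> {0..<N} \<and> d2 \<in> {0..<N} \<and> d4 \<in> {0..<N} \<and>
             [h1 = a * (d1 + d4)] (mod N) \<and>
             [(d1 * d4 - d2^2) * h2 = b * (d4 * c1 - d2 * c2 + d1 * c4)] (mod N) \<and>
             \<not> [d1 * d4 - d2^2 = 0] (mod N)}"
  shows "\<bar>real (card S)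
        - (if [h1 = 0] (mod N) \<and> [h2 = 0] (mod N) \<and> [c1 = c4] (mod N) \<and> [c2 = 0] (mod N)
           then real_of_int N ^ 2 else 0)\<bar> \<le> 2 * real_of_int N"
proof -
  have N1: "N > 1" using p prime_gt_1_int by blast
  have memS: "(d1,d2,d4) \<in> S \<longleftrightarrow> d1 \<in> {0..<N} \<and> d2 \<in> {0..<N} \<and> d4 \<in> {0..<N} \<and>
      N dvd (h1 - a * (d1 + d4)) \<and>
      N dvd ((d1 * d4 - d2^2) * h2 - b * (d4 * c1 - d2 * c2 + d1 * c4)) \<and>
      \<not> N dvd (d1 * d4 - d2^2)" for d1 d2 d4
    unfolding S_def by (simp add: cong_iff_dvd_diff cong_0_iff)
  define pr where "pr = (\<lambda>(d1::int,d2::int,d4::int). (d1,d2))"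
  define P where "P = pr ` S"
  have finS: "finite S"
    by (rule finite_subset[of _ "{0..<N} \<times> {0..<N} \<times> {0..<N}"]) (auto simp: S_def)
  have inj: "inj_on pr S"
  proof (rule inj_onI)
    fix x y assume xy: "x \<in> S" "y \<in> S" "pr x = pr y"
    obtain d1 d2 d4 where x: "x = (d1,d2,d4)" by (cases x) auto
    obtain e1 e2 e4 where y: "y = (e1,e2,e4)" by (cases y) auto
    have e: "e1 = d1" "e2 = d2" using xy(3) x y by (auto simp: pr_def)
    have X: "N dvd (h1 - a * (d1 + d4))" "d4 \<in> {0..<N}" using xy(1) x memS by auto
    have Y: "N dvd (h1 - a * (d1 + e4))" "e4 \<in> {0..<N}" using xy(2) y e memS by auto
    have "N dvd ((h1 - a * (d1 + d4)) - (h1 - a * (d1 + e4)))" using X(1) Y(1) by (rule dvd_diff)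
    hence "N dvd a * (e4 - d4)" by (simp add: algebra_simps)
    hence "N dvd (e4 - d4)" using p a prime_dvd_mult_iff by blast
    hence "e4 = d4" using X Y box_eq[of e4 N d4] by auto
    thus "x = y" using x y e by simp
  qed
  have cardS: "card S = card P" unfolding P_def by (simp add: card_image inj)
  have Psub: "P \<subseteq> {0..<N} \<times> {0..<N}" unfolding P_def pr_def using memS by fastforce
  have cardbox: "card ({0..<N} \<times> {0..<N}) = nat N * nat N" by (simp add: card_cartesian_product)
  have upper: "card S \<le> nat N * nat N"
    unfolding cardS cardbox[symmetric] by (rule card_mono) (use Psub in auto)
  have Tdvd: "N dvd (-(a*h2)*d1^2 + (h2*h1 + a*b*c1 - a*b*c4)*d1 + (-a*h2*d2^2 - b*h1*c1 + a*b*d2*c2))"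
    if dP: "(d1,d2) \<in> P" for d1 d2
  proof -
    obtain d4 where "(d1,d2,d4) \<in> S" using dP unfolding P_def pr_def by auto
    hence E: "N dvd (h1 - a * (d1 + d4))"
      "N dvd ((d1 * d4 - d2^2) * h2 - b * (d4 * c1 - d2 * c2 + d1 * c4))" using memS by auto
    have "N dvd (a * ((d1 * d4 - d2^2) * h2 - b * (d4 * c1 - d2 * c2 + d1 * c4))
               + (h2*d1 - b*c1) * (h1 - a * (d1 + d4)))"
      using E by (intro dvd_add dvd_mult2 dvd_mult) auto
    moreover have "a * ((d1 * d4 - d2^2) * h2 - b * (d4 * c1 - d2 * c2 + d1 * c4))
               + (h2*d1 - b*c1) * (h1 - a * (d1 + d4)) =
       -(a*h2)*d1^2 + (h2*h1 + a*b*c1 - a*b*c4)*d1 + (-a*h2*d2^2 - b*h1*c1 + a*b*d2*c2)"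
      by (simp add: algebra_simps power2_eq_square)
    ultimately show ?thesis by simp
  qed
  have Ldvd: "N dvd ((a*b*(c1-c4))*d1 + (a*b*d2*c2 - b*h1*c1))"
    if "(d1,d2) \<in> P" "N dvd h2" for d1 d2
  proof -
    have "N dvd ((-(a*h2)*d1^2 + (h2*h1 + a*b*c1 - a*b*c4)*d1 + (-a*h2*d2^2 - b*h1*c1 + a*b*d2*c2))
       - h2 * (h1*d1 - a*d1^2 - a*d2^2))"
      using Tdvd[OF that(1)] that(2) by (intro dvd_diff dvd_mult2) auto
    moreover have "(-(a*h2)*d1^2 + (h2*h1 + a*b*c1 - a*b*c4)*d1 + (-a*h2*d2^2 - b*h1*c1 + a*b*d2*c2))
       - h2 * (h1*d1 - a*d1^2 - a*d2^2) = (a*b*(c1-c4))*d1 + (a*b*d2*c2 - b*h1*c1)"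
      by (simp add: algebra_simps)
    ultimately show ?thesis by (simp only:)
  qed
  have ndm: "\<not> N dvd x * y" if "\<not> N dvd x" "\<not> N dvd y" for x y
    using that p prime_dvd_mult_iff by blast
  show ?thesis
  proof (cases "N dvd h2 \<and> N dvd (c1 - c4) \<and> N dvd c2 \<and> N dvd h1")
    case False
    hence cond: "\<not> ([h1 = 0] (mod N) \<and> [h2 = 0] (mod N) \<and> [c1 = c4] (mod N) \<and> [c2 = 0] (mod N))"
      by (auto simp: cong_iff_dvd_diff cong_0_iff)
    have "card P \<le> 2 * nat N"
    proof (cases "N dvd h2")
      case False
      show ?thesis
      proof (rule fiber[OF Psub])
        fix y assume "y \<in> {0..<N}"
        have "{x \<in> {0..<N}. (x, y) \<in> P} \<subseteq> {x \<in> {0..<N}. N dvd (-(a*h2)*x^2 + (h2*h1 + a*b*c1 - a*b*c4)*x + (-a*h2*y^2 - b*h1*c1 + a*b*y*c2))}"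
          using Tdvd by auto
        moreover have "card {x \<in> {0..<N}. N dvd (-(a*h2)*x^2 + (h2*h1 + a*b*c1 - a*b*c4)*x + (-a*h2*y^2 - b*h1*c1 + a*b*y*c2))} \<le> 2"
          by (rule quad_roots[OF p]) (use ndm[OF a False] in simp)
        moreover have "finite {x \<in> {0..<N}. N dvd (-(a*h2)*x^2 + (h2*h1 + a*b*c1 - a*b*c4)*x + (-a*h2*y^2 - b*h1*c1 + a*b*y*c2))}"
          by (rule finite_subset[of _ "{0..<N}"]) auto
        ultimately show "card {x \<in> {0..<N}. (x, y) \<in> P} \<le> 2" by (meson card_mono le_trans)
      qed
    next
      case h2: True
      show ?thesis
      proof (cases "N dvd (c1 - c4)")
        case False
        have "card P \<le> 1 * nat N"
        proof (rule fiber[OF Psub])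
          fix y assume "y \<in> {0..<N}"
          have "{x \<in> {0..<N}. (x, y) \<in> P} \<subseteq> {x \<in> {0..<N}. N dvd ((a*b*(c1-c4))*x + (a*b*y*c2 - b*h1*c1))}"
            using Ldvd h2 by auto
          moreover have "card {x \<in> {0..<N}. N dvd ((a*b*(c1-c4))*x + (a*b*y*c2 - b*h1*c1))} \<le> 1"
            by (rule lin_roots[OF p]) (use ndm[OF ndm[OF a b] False] in simp)
          moreover have "finite {x \<in> {0..<N}. N dvd ((a*b*(c1-c4))*x + (a*b*y*c2 - b*h1*c1))}"
            by (rule finite_subset[of _ "{0..<N}"]) auto
          ultimately show "card {x \<in> {0..<N}. (x, y) \<in> P} \<le> 1" by (meson card_mono le_trans)
        qed
        thus ?thesis by simp
      next
        case c14: True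
        have L2: "N dvd ((a*b*c2)*d2 + ((a*b*(c1-c4))*d1 - b*h1*c1))" if "(d1,d2) \<in> P" for d1 d2
        proof -
          have "(a*b*c2)*d2 + ((a*b*(c1-c4))*d1 - b*h1*c1) = (a*b*(c1-c4))*d1 + (a*b*d2*c2 - b*h1*c1)"
            by (simp add: algebra_simps)
          thus ?thesis using Ldvd[OF that h2] by (simp only:)
        qed
        show ?thesis
        proof (cases "N dvd c2")
          case False
          have "card P \<le> 1 * nat N"
          proof (rule fiber2[OF Psub])
            fix x assume "x \<in> {0..<N}"
            have "{y \<in> {0..<N}. (x, y) \<in> P} \<subseteq> {y \<in> {0..<N}. N dvd ((a*b*c2)*y + ((a*b*(c1-c4))*x - b*h1*c1))}"
              using L2 by auto
            moreover have "card {y \<in> {0..<N}. N dvd ((a*b*c2)*y + ((a*b*(c1-c4))*x - b*h1*c1))} \<le> 1"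
              by (rule lin_roots[OF p]) (use ndm[OF ndm[OF a b] False] in simp)
            moreover have "finite {y \<in> {0..<N}. N dvd ((a*b*c2)*y + ((a*b*(c1-c4))*x - b*h1*c1))}"
              by (rule finite_subset[of _ "{0..<N}"]) auto
            ultimately show "card {y \<in> {0..<N}. (x, y) \<in> P} \<le> 1" by (meson card_mono le_trans)
          qed
          thus ?thesis by simp
        next
          case c2: True
          with False h2 c14 have h1: "\<not> N dvd h1" by blast
          have c1: "\<not> N dvd c1"
          proof
            assume "N dvd c1"
            hence "N dvd (4*c1*c4 - c2^2)" using c2 by (intro dvd_diff dvd_mult2 dvd_mult) (auto simp: power2_eq_square)
            thus False using nd by simp
          qed
          have "P = {}"
          proof (rule ccontr)
            assume "P \<noteq> {}"
            then obtain d1 d2 where d: "(d1,d2) \<in> P" by auto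
            have t1: "N dvd (a*b*c2)*d2" using c2 by (metis dvd_mult dvd_mult2)
            have t2: "N dvd (a*b*(c1-c4))*d1" using c14 by (metis dvd_mult dvd_mult2)
            have "N dvd ((a*b*c2)*d2 + (a*b*(c1-c4))*d1 - ((a*b*c2)*d2 + ((a*b*(c1-c4))*d1 - b*h1*c1)))"
              by (rule dvd_diff[OF dvd_add[OF t1 t2] L2[OF d]])
            hence "N dvd b*h1*c1" by (simp add: algebra_simps)
            thus False using ndm[OF ndm[OF b h1] c1] by simp
          qed
          thus ?thesis by simp
        qed
      qed
    qed
    hence "real (card P) \<le> real (2 * nat N)" by (simp only: of_nat_le_iff)
    moreover have "real (2 * nat N) = 2 * real_of_int N" using N1 by simp
    ultimately have "real (card S) \<le> 2 * real_of_int N" using cardS by simp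
    thus ?thesis unfolding if_not_P[OF cond] by simp
  next
    case True
    hence cond: "[h1 = 0] (mod N) \<and> [h2 = 0] (mod N) \<and> [c1 = c4] (mod N) \<and> [c2 = 0] (mod N)"
      by (auto simp: cong_iff_dvd_diff cong_0_iff)
    define B where "B = {xy \<in> {0..<N} \<times> {0..<N}. N dvd (fst xy ^ 2 + snd xy ^ 2)}"
    define G where "G = {0..<N} \<times> {0..<N} - B"
    define g where "g = (\<lambda>(d1::int, d2::int). (d1, d2, (-d1) mod N))"
    have Bsub: "B \<subseteq> {0..<N} \<times> {0..<N}" unfolding B_def by auto
    have cardB: "card B \<le> 2 * nat N"
    proof (rule fiber[OF Bsub])
      fix y assume "y \<in> {0..<N}"
      have "{x \<in> {0..<N}. (x, y) \<in> B} = {x \<in> {0..<N}. N dvd (1*x^2 + 0*x + y^2)}"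
        using \<open>y \<in> _\<close> by (auto simp: B_def)
      moreover have "card {x \<in> {0..<N}. N dvd (1*x^2 + 0*x + y^2)} \<le> 2"
        by (rule quad_roots[OF p]) (use N1 in \<open>simp add: zdvd_not_zless\<close>)
      ultimately show "card {x \<in> {0..<N}. (x, y) \<in> B} \<le> 2" by simp
    qed
    have cardG: "card G = nat N * nat N - card B"
      unfolding G_def by (subst card_Diff_subset) (auto simp: Bsub cardbox intro: finite_subset[OF Bsub])
    have "g ` G \<subseteq> S"
    proof
      fix z assume "z \<in> g ` G"
      then obtain d1 d2 where d: "(d1,d2) \<in> G" "z = (d1, d2, (-d1) mod N)" unfolding g_def by auto
      define d4 where "d4 = (-d1) mod N"
      have d14: "N dvd (d1 + d4)" unfolding d4_def dvd_eq_mod_eq_0 by (simp add: mod_add_right_eq)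
      have r: "d1 \<in> {0..<N}" "d2 \<in> {0..<N}" "d4 \<in> {0..<N}" using d N1 by (auto simp: G_def d4_def)
      have nb: "\<not> N dvd (d1^2 + d2^2)" using d r by (auto simp: G_def B_def)
      have "N dvd (h1 - a * (d1 + d4))" using True d14 by (intro dvd_diff dvd_mult) auto
      moreover have "N dvd ((d1 * d4 - d2^2) * h2 - b * (d4 * c1 - d2 * c2 + d1 * c4))"
      proof -
        have "(d1 * d4 - d2^2) * h2 - b * (d4 * c1 - d2 * c2 + d1 * c4) =
           (d1 * d4 - d2^2) * h2 - b * ((d1 + d4) * c1 - d2 * c2 - d1 * (c1 - c4))"
          by (simp add: algebra_simps)
        moreover have "N dvd \<dots>"
        proof -
          have u1: "N dvd (d1 * d4 - d2^2) * h2" using True by (metis dvd_mult)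
          have u2: "N dvd (d1+d4)*c1" using d14 by (metis dvd_mult2)
          have u3: "N dvd d2*c2" using True by (metis dvd_mult)
          have u4: "N dvd d1*(c1-c4)" using True by (metis dvd_mult)
          show ?thesis by (rule dvd_diff[OF u1 dvd_mult[OF dvd_diff[OF dvd_diff[OF u2 u3] u4]]])
        qed
        ultimately show ?thesis by (simp only:)
      qed
      moreover have "\<not> N dvd (d1 * d4 - d2^2)"
      proof
        assume "N dvd (d1 * d4 - d2^2)"
        hence "N dvd (d1 * (d1 + d4) - (d1 * d4 - d2^2))" by (rule dvd_diff[OF dvd_mult[OF d14]])
        moreover have "d1 * (d1 + d4) - (d1 * d4 - d2^2) = d1^2 + d2^2" by (simp add: algebra_simps power2_eq_square)
        ultimately have "N dvd (d1^2 + d2^2)" by (simp only:)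
        thus False using nb by simp
      qed
      ultimately show "z \<in> S" using r d(2) memS d4_def by simp
    qed
    moreover have "inj_on g G" unfolding g_def by (auto simp: inj_on_def)
    ultimately have "card G \<le> card S" using finS card_inj_on_le by blast
    hence lo: "nat N * nat N - card B \<le> card S" using cardG by simp
    have "card B \<le> nat N * nat N" using Bsub card_mono[OF _ Bsub] cardbox by simp
    hence "real (nat N * nat N) - real (card B) = real (nat N * nat N - card B)" by (simp add: of_nat_diff)
    also have "\<dots> \<le> real (card S)" using lo by (simp only: of_nat_le_iff)
    finally have "real (nat N * nat N) - real (card B) \<le> real (card S)" .
    moreover have "real (card B) \<le> real (2 * nat N)" using cardB by (simp only: of_nat_le_iff)
    moreover have "real (2 * nat N) = 2 * real_of_int N" using N1 by simp
    moreover have "real (card S) \<le> real (nat N * nat N)" using upper by (simp only: of_nat_le_iff)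
    moreover have "real (nat N * nat N) = real_of_int N ^ 2" using N1 by (simp add: power2_eq_square)
    ultimately show ?thesis unfolding if_P[OF cond] by simp
  qed
qed

theorem lemma8:
  "\<exists>C::real. \<forall>(N::int) (a::int) (b::int) (c1::int) (c2::int) (c4::int) (h1::int) (h2::int).
     prime N \<longrightarrow> [N = 3] (mod 4) \<longrightarrow>
     \<not> [4 * c1 * c4 - c2^2 = 0] (mod N) \<longrightarrow>
     coprime a N \<longrightarrow> coprime b N \<longrightarrow>
     \<bar>real (L_count N a b c1 c2 c4 h1 h2)
        - (if [h1 = 0] (mod N) \<and> [h2 = 0] (mod N) \<and> [c1 = c4] (mod N) \<and> [c2 = 0] (mod N)
           then real_of_int N ^ 2 else 0)\<bar> \<le> C * real_of_int N"
proof (rule exI[of _ 2], intro allI impI)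
  fix N a b c1 c2 c4 h1 h2 :: int
  assume p: "prime N" and "[N = 3] (mod 4)" and nd: "\<not> [4 * c1 * c4 - c2^2 = 0] (mod N)"
    and ca: "coprime a N" and cb: "coprime b N"
  have na: "\<not> N dvd a"
  proof
    assume "N dvd a"
    hence "is_unit N" by (rule coprime_common_divisor[OF ca _ dvd_refl])
    thus False using p not_prime_unit by metis
  qed
  have nb: "\<not> N dvd b"
  proof
    assume "N dvd b"
    hence "is_unit N" by (rule coprime_common_divisor[OF cb _ dvd_refl])
    thus False using p not_prime_unit by metis
  qed
  have nd': "\<not> N dvd (4*c1*c4 - c2^2)" using nd by (simp add: cong_0_iff)
  show "\<bar>real (L_count N a b c1 c2 c4 h1 h2)
        - (if [h1 = 0] (mod N) \<and> [h2 = 0] (mod N) \<and> [c1 = c4] (mod N) \<and> [c2 = 0] (mod N)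
           then real_of_int N ^ 2 else 0)\<bar> \<le> 2 * real_of_int N"
    unfolding L_count_def by (rule main_bound[OF p nd' na nb])
qed

end
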